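(* Let $P=\operatorname{conv}(W(\Lambda))$ be a full-dimensional $W$-symmetric polytope, $K\subseteq S$, and let $F$ be a facet of $P$ whose barycenter lies in $C_K$. (1) The stabilizer $W_F$ of $F$ in $W_K$ is generated by the simple reflections $r_k$, $k\in K$, that fix the barycenter of $F$. (2) If $P$ is non-degenerate, then for every $s\in W_K$ the intersection $s(F)\cap F$ is either $F$ or empty.
   Context: $V$ is a real Euclidean space of dimension $n$, $R$ a reduced root system spanning $V$ with simple system $S=\{\alpha_1,\dots,\alpha_n\}$ identified with $\{1,\dots,n\}$; $r_i(x)=x-\frac{2\langle x,\alpha_i\rangle}{\langle\alpha_i,\alpha_i\rangle}\alpha_i$; $W$ generated by all $r_i$, $W_K$ by $r_k$, $k\in K$. $C_K=\{x:\langle x,\alpha_k\rangle\ge0\ \forall k\in K\}$; $\Lambda\subset C_S$ finite. $P$ is non-degenerate if no vertex of $P$ lies on the boundary of $C_S$. *)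

theory Defs
  imports "HOL-Analysis.Analysis"
begin

definition refl :: "'a::euclidean_space \<Rightarrow> 'a \<Rightarrow> 'a" where
  "refl \<alpha> x = x - ((2 * (x \<bullet> \<alpha>)) / (\<alpha> \<bullet> \<alpha>)) *\<^sub>R \<alpha>"

definition reduced_root_system :: "'a::euclidean_space set \<Rightarrow> bool" where
  "reduced_root_system R \<longleftrightarrow>
     finite R \<and> 0 \<notin> R \<and> span R = UNIV \<and>
     (\<forall>\<alpha>\<in>R. refl \<alpha> ` R = R) \<and>
     (\<forall>\<alpha>\<in>R. \<forall>\<beta>\<in>R. (2 * (\<beta> \<bullet> \<alpha>)) / (\<alpha> \<bullet> \<alpha>) \<in> \<int>) \<and>
     (\<forall>\<alpha>\<in>R. \<forall>c::real. c *\<^sub>R \<alpha> \<in> R \<longrightarrow> c = 1 \<or> c = -1)"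

definition simple_system :: "'a::euclidean_space set \<Rightarrow> 'a set \<Rightarrow> bool" where
  "simple_system R S \<longleftrightarrow> S \<subseteq> R \<and> independent S \<and>
     (\<forall>\<beta>\<in>R. \<exists>c. \<beta> = (\<Sum>\<alpha>\<in>S. c \<alpha> *\<^sub>R \<alpha>) \<and>
        ((\<forall>\<alpha>\<in>S. c \<alpha> \<ge> 0) \<or> (\<forall>\<alpha>\<in>S. c \<alpha> \<le> 0)))"

text \<open>The group W_K generated by the simple reflections r_k, k in K. Since each
  r_k is an involution, the monoid generated equals the group generated.\<close>
inductive_set refl_group :: "'a::euclidean_space set \<Rightarrow> ('a \<Rightarrow> 'a) set"
  for K :: "'a set" where
  id: "id \<in> refl_group K"
| step: "k \<in> K \<Longrightarrow> w \<in> refl_group K \<Longrightarrow> refl k \<circ> w \<in> refl_group K"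

definition chamber :: "'a::euclidean_space set \<Rightarrow> 'a set" where
  "chamber K = {x. \<forall>k\<in>K. x \<bullet> k \<ge> 0}"

definition barycenter :: "'a::euclidean_space set \<Rightarrow> 'a" where
  "barycenter F = (1 / real (card {v. v extreme_point_of F})) *\<^sub>R (\<Sum>v\<in>{v. v extreme_point_of F}. v)"

definition non_degenerate :: "'a::euclidean_space set \<Rightarrow> 'a set \<Rightarrow> bool" where
  "non_degenerate S P \<longleftrightarrow> (\<forall>v. v extreme_point_of P \<longrightarrow> v \<notin> frontier (chamber S))"

end

theory Submission
  imports Defs
begin


lemma refl_linear: "linear (refl a)"
  unfolding refl_def
  by (rule linearI) (auto simp: inner_add_left algebra_simps add_divide_distrib scaleR_add_left)

lemma refl_refl: "a \<noteq> 0 \<Longrightarrow> refl a (refl a x) = x"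
  unfolding refl_def
  by (simp add: inner_diff_left algebra_simps scaleR_diff_left)

lemma refl_self: "a \<noteq> 0 \<Longrightarrow> refl a a = - a"
  unfolding refl_def by (simp add: scaleR_2)

lemma refl_inner: "a \<noteq> 0 \<Longrightarrow> refl a x \<bullet> refl a y = x \<bullet> y"
  unfolding refl_def
  by (simp add: inner_diff_left inner_diff_right algebra_simps inner_commute)

lemma refl_fix: "a \<noteq> 0 \<Longrightarrow> refl a x = x \<longleftrightarrow> x \<bullet> a = 0"
  unfolding refl_def by auto

lemma refl_conj:
  assumes "linear f" "\<And>x y. f x \<bullet> f y = x \<bullet> y"
  shows "refl (f a) (f y) = f (refl a y)"
  unfolding refl_def using assms
  by (simp add: linear_diff linear_scale)

primrec wprod :: "'a::euclidean_space list \<Rightarrow> 'a \<Rightarrow> 'a" where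
  "wprod [] = id"
| "wprod (k # ks) = refl k \<circ> wprod ks"

lemma wprod_append: "wprod (ks @ ls) = wprod ks \<circ> wprod ls"
  by (induction ks) auto

lemma wprod_linear: "linear (wprod ks)"
proof (induction ks)
  case Nil show ?case using linear_id by (simp add: id_def)
next
  case (Cons k ks) then show ?case
    by (simp only: wprod.simps) (rule linear_compose[OF _ refl_linear])
qed

lemma wprod_inner: "0 \<notin> set ks \<Longrightarrow> wprod ks x \<bullet> wprod ks y = x \<bullet> y"
  by (induction ks arbitrary: x y) (auto simp: refl_inner)

lemma wprod_rev_left: "0 \<notin> set ks \<Longrightarrow> wprod (rev ks) (wprod ks x) = x"
  by (induction ks arbitrary: x) (auto simp: wprod_append refl_refl)

lemma wprod_rev_right: "0 \<notin> set ks \<Longrightarrow> wprod ks (wprod (rev ks) x) = x"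
  using wprod_rev_left[of "rev ks" x] by simp

lemma wprod_span: "wprod ks x - x \<in> span (set ks)"
proof (induction ks)
  case Nil then show ?case by (simp add: span_zero)
next
  case (Cons k ks)
  have "wprod (k # ks) x - x = (wprod ks x - x) - ((2 * (wprod ks x \<bullet> k)) / (k \<bullet> k)) *\<^sub>R k"
    by (simp add: refl_def algebra_simps)
  moreover have "wprod ks x - x \<in> span (set (k # ks))"
    using Cons span_mono[of "set ks" "set (k#ks)"] by auto
  moreover have "k \<in> span (set (k # ks))" by (simp add: span_base)
  ultimately show ?case by (metis span_diff span_scale)
qed

lemma refl_group_iff: "w \<in> refl_group K \<longleftrightarrow> (\<exists>ks. set ks \<subseteq> K \<and> w = wprod ks)"
proof
  assume "w \<in> refl_group K"
  then show "\<exists>ks. set ks \<subseteq> K \<and> w = wprod ks"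
  proof induction
    case id then show ?case by (intro exI[of _ "[]"]) auto
  next
    case (step k w)
    then obtain ks where "set ks \<subseteq> K" "w = wprod ks" by auto
    with step show ?case by (intro exI[of _ "k # ks"]) auto
  qed
next
  assume "\<exists>ks. set ks \<subseteq> K \<and> w = wprod ks"
  then obtain ks where ks: "set ks \<subseteq> K" "w = wprod ks" by auto
  have "wprod ks \<in> refl_group K" using ks(1)
    by (induction ks) (auto intro: refl_group.intros)
  with ks show "w \<in> refl_group K" by simp
qed


locale rootsys =
  fixes R S :: "'a::euclidean_space set"
  assumes rrs: "reduced_root_system R" and ss: "simple_system R S"
begin

lemma R_fin: "finite R" and zero_R: "0 \<notin> R" and span_R: "span R = UNIV"
  and refl_R: "\<And>a. a \<in> R \<Longrightarrow> refl a ` R = R"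
  and red_R: "\<And>a c. a \<in> R \<Longrightarrow> c *\<^sub>R a \<in> R \<Longrightarrow> c = 1 \<or> c = -1"
  using rrs unfolding reduced_root_system_def by auto

lemma S_sub: "S \<subseteq> R" and S_ind: "independent S"
  and S_comb: "\<And>b. b \<in> R \<Longrightarrow> \<exists>c. b = (\<Sum>a\<in>S. c a *\<^sub>R a) \<and> ((\<forall>a\<in>S. c a \<ge> 0) \<or> (\<forall>a\<in>S. c a \<le> 0))"
  using ss unfolding simple_system_def by auto

lemma S_fin: "finite S" using S_sub R_fin finite_subset by auto

lemma zero_S: "0 \<notin> S" using S_sub zero_R by auto

lemma span_S: "span S = UNIV"
proof -
  have "R \<subseteq> span S"
  proof
    fix b assume "b \<in> R"
    then obtain c where "b = (\<Sum>a\<in>S. c a *\<^sub>R a)" using S_comb by blast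
    then show "b \<in> span S" by (simp add: span_sum span_scale span_base)
  qed
  then have "span R \<subseteq> span S" by (simp add: span_minimal)
  then show ?thesis using span_R by auto
qed

abbreviation coef where "coef x \<equiv> representation S x"

lemma in_spanS[simp]: "x \<in> span S" using span_S by auto

lemma coef_expand: "(\<Sum>a\<in>S. coef x a *\<^sub>R a) = x"
  by (rule sum_representation_eq[OF S_ind in_spanS S_fin]) simp

lemma coef_diff: "coef (x - y) a = coef x a - coef y a"
  by (simp add: representation_diff[OF S_ind])

lemma coef_add: "coef (x + y) a = coef x a + coef y a"
  by (simp add: representation_add[OF S_ind])

lemma coef_neg: "coef (- x) a = - coef x a"
  by (simp add: representation_neg[OF S_ind])

lemma coef_scale: "coef (c *\<^sub>R x) a = c * coef x a"
  by (simp add: representation_scale[OF S_ind])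

lemma coef_basis: "b \<in> S \<Longrightarrow> coef b a = (if a = b then 1 else 0)"
  by (simp add: representation_basis[OF S_ind])

lemma coef_sum: "coef (\<Sum>b\<in>S. c b *\<^sub>R b) a = (\<Sum>b\<in>S. c b * coef b a)"
  by (simp add: representation_sum[OF S_ind] coef_scale)

lemma coef_comb: "a \<in> S \<Longrightarrow> coef (\<Sum>b\<in>S. c b *\<^sub>R b) a = c a"
  by (simp add: coef_sum coef_basis S_fin if_distrib cong: if_cong)

definition pos where "pos x \<longleftrightarrow> (\<forall>a\<in>S. 0 \<le> coef x a)"

lemma root_sign: "b \<in> R \<Longrightarrow> pos b \<or> pos (- b)"
proof -
  assume "b \<in> R"
  then obtain c where c: "b = (\<Sum>a\<in>S. c a *\<^sub>R a)" "(\<forall>a\<in>S. c a \<ge> 0) \<or> (\<forall>a\<in>S. c a \<le> 0)"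
    using S_comb by blast
  have "\<And>a. a \<in> S \<Longrightarrow> coef b a = c a" using c(1) coef_comb by simp
  then show ?thesis using c(2) by (auto simp: pos_def coef_neg)
qed

lemma coef_zero: "(\<And>a. a \<in> S \<Longrightarrow> coef x a = 0) \<Longrightarrow> x = 0"
  using coef_expand[of x] by simp

lemma pos_neg_zero: "pos x \<Longrightarrow> pos (- x) \<Longrightarrow> x = 0"
  by (rule coef_zero) (auto simp: pos_def coef_neg intro: order.antisym)

lemma pos_S: "a \<in> S \<Longrightarrow> pos a"
  by (auto simp: pos_def coef_basis)

lemma wprod_R: "set ks \<subseteq> R \<Longrightarrow> b \<in> R \<Longrightarrow> wprod ks b \<in> R"
  by (induction ks) (auto dest: refl_R)

lemma L1:
  assumes a: "a \<in> S" and b: "b \<in> R" "pos b" "b \<noteq> a"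
  shows "pos (refl a b)"
proof (rule ccontr)
  assume np: "\<not> pos (refl a b)"
  have aR: "a \<in> R" using a S_sub by auto
  have rR: "refl a b \<in> R" using refl_R[OF aR] b by auto
  then have pn: "pos (- refl a b)" using root_sign np by auto
  define c where "c = (2 * (b \<bullet> a)) / (a \<bullet> a)"
  have rb: "refl a b = b - c *\<^sub>R a" by (simp add: refl_def c_def)
  have co: "coef (refl a b) g = coef b g - c * (if g = a then 1 else 0)" for g
    by (simp add: rb coef_diff coef_scale coef_basis[OF a])
  have z: "g \<in> S \<Longrightarrow> g \<noteq> a \<Longrightarrow> coef b g = 0" for g
  proof -
    assume g: "g \<in> S" "g \<noteq> a"
    have "coef (refl a b) g \<le> 0" using pn g by (auto simp: pos_def coef_neg)
    moreover have "0 \<le> coef b g" using b(2) g by (auto simp: pos_def)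
    ultimately show "coef b g = 0" using co[of g] g by auto
  qed
  have "b = (\<Sum>g\<in>S. coef b g *\<^sub>R g)" by (simp add: coef_expand)
  also have "\<dots> = (\<Sum>g\<in>S. if g = a then coef b a *\<^sub>R g else 0)"
    by (rule sum.cong) (auto simp: z)
  also have "\<dots> = coef b a *\<^sub>R a" using a by (simp add: S_fin)
  finally have be: "b = coef b a *\<^sub>R a" .
  then have "coef b a = 1 \<or> coef b a = -1" using red_R[OF aR] b(1) by metis
  moreover have "coef b a \<ge> 0" using b(2) a by (auto simp: pos_def)
  ultimately have "coef b a = 1" by auto
  then show False using be b(3) by simp
qed

lemma zero_ks: "set ks \<subseteq> S \<Longrightarrow> 0 \<notin> set ks" using zero_S by auto

lemma deletion:
  assumes "set ks \<subseteq> S" "a \<in> S" "\<not> pos (wprod ks a)"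
  shows "\<exists>i<length ks. wprod ks \<circ> refl a = wprod (take i ks @ drop (Suc i) ks)"
  using assms
proof (induction ks)
  case Nil then show ?case using pos_S by simp
next
  case (Cons k ks)
  have ks: "set ks \<subseteq> S" and k: "k \<in> S" using Cons.prems by auto
  show ?case
  proof (cases "pos (wprod ks a)")
    case False
    then obtain i where i: "i < length ks" "wprod ks \<circ> refl a = wprod (take i ks @ drop (Suc i) ks)"
      using Cons.IH ks Cons.prems(2) by blast
    have "wprod (k # ks) \<circ> refl a = refl k \<circ> (wprod ks \<circ> refl a)" by (simp add: comp_assoc)
    also have "\<dots> = refl k \<circ> wprod (take i ks @ drop (Suc i) ks)" by (simp only: i(2))
    also have "\<dots> = wprod (take (Suc i) (k # ks) @ drop (Suc (Suc i)) (k # ks))" by simp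
    finally have fin: "wprod (k # ks) \<circ> refl a = wprod (take (Suc i) (k # ks) @ drop (Suc (Suc i)) (k # ks))" .
    have "Suc i < length (k # ks)" using i(1) by simp
    with fin show ?thesis by blast
  next
    case True
    have aR: "a \<in> R" using Cons.prems(2) S_sub by auto
    have bR: "wprod ks a \<in> R" using wprod_R[OF _ aR] ks S_sub by auto
    have "\<not> pos (refl k (wprod ks a))" using Cons.prems(3) by simp
    then have eq: "wprod ks a = k" using L1[OF k bR True] by blast
    have a0: "a \<noteq> 0" using Cons.prems(2) zero_S by auto
    have fin: "wprod (k # ks) \<circ> refl a = wprod ks"
    proof
      fix y
      have "(wprod (k # ks) \<circ> refl a) y = refl (wprod ks a) (wprod ks (refl a y))"
        by (simp add: eq)
      also have "\<dots> = wprod ks (refl a (refl a y))"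
        by (rule refl_conj[OF wprod_linear wprod_inner[OF zero_ks[OF ks]]])
      also have "\<dots> = wprod ks y" by (simp add: refl_refl[OF a0])
      finally show "(wprod (k # ks) \<circ> refl a) y = wprod ks y" .
    qed
    have "wprod ks = wprod (take 0 (k # ks) @ drop (Suc 0) (k # ks))" by simp
    with fin show ?thesis by (metis length_Cons zero_less_Suc)
  qed
qed

end

context rootsys begin

definition reduced where
  "reduced K ks \<longleftrightarrow> set ks \<subseteq> K \<and> (\<forall>ls. set ls \<subseteq> K \<longrightarrow> wprod ls = wprod ks \<longrightarrow> length ks \<le> length ls)"

lemma exists_reduced: "set ks \<subseteq> K \<Longrightarrow> \<exists>ls. reduced K ls \<and> wprod ls = wprod ks"
proof -
  assume ks: "set ks \<subseteq> K"
  define P where "P ls \<longleftrightarrow> set ls \<subseteq> K \<and> wprod ls = wprod ks" for ls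
  have "P ks" using ks by (simp add: P_def)
  then have "\<exists>ls. P ls \<and> (\<forall>ms. P ms \<longrightarrow> length ls \<le> length ms)"
    by (rule ex_has_least_nat)
  then obtain ls where ls: "P ls" "\<forall>ms. P ms \<longrightarrow> length ls \<le> length ms" by blast
  have "reduced K ls" unfolding reduced_def
  proof (intro conjI allI impI)
    show "set ls \<subseteq> K" using ls(1) by (simp add: P_def)
    fix ms assume "set ms \<subseteq> K" "wprod ms = wprod ls"
    then have "P ms" using ls(1) by (simp add: P_def)
    then show "length ls \<le> length ms" using ls(2) by blast
  qed
  then show ?thesis using ls(1) by (auto simp: P_def)
qed

lemma reduced_tail: "reduced K (k # ks) \<Longrightarrow> reduced K ks"
  unfolding reduced_def
proof (intro conjI allI impI)
  assume a: "set (k # ks) \<subseteq> K \<and> (\<forall>ls. set ls \<subseteq> K \<longrightarrow> wprod ls = wprod (k # ks) \<longrightarrow> length (k # ks) \<le> length ls)"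
  then show "set ks \<subseteq> K" by auto
  fix ls assume "set ls \<subseteq> K" "wprod ls = wprod ks"
  moreover have "set (k # ls) \<subseteq> K" using a \<open>set ls \<subseteq> K\<close> by auto
  moreover have "wprod (k # ls) = wprod (k # ks)" using \<open>wprod ls = wprod ks\<close> by simp
  ultimately have "length (k # ks) \<le> length (k # ls)" using a by blast
  then show "length ks \<le> length ls" by simp
qed

lemma wprod_rev_eq:
  assumes "set A \<subseteq> S" "set B \<subseteq> S" "wprod A = wprod B"
  shows "wprod (rev A) = wprod (rev B)"
proof
  fix x
  have "wprod (rev A) x = wprod (rev A) (wprod B (wprod (rev B) x))"
    using wprod_rev_right[OF zero_ks[OF assms(2)]] by simp
  also have "\<dots> = wprod (rev A) (wprod A (wprod (rev B) x))"
    using assms(3) by simp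
  also have "\<dots> = wprod (rev B) x"
    by (rule wprod_rev_left[OF zero_ks[OF assms(1)]])
  finally show "wprod (rev A) x = wprod (rev B) x" .
qed

lemma reduced_pos:
  assumes K: "K \<subseteq> S" and r: "reduced K (k # ks)"
  shows "pos (wprod (rev ks) k)"
proof (rule ccontr)
  assume np: "\<not> pos (wprod (rev ks) k)"
  have ksK: "set ks \<subseteq> K" and kK: "k \<in> K" using r by (auto simp: reduced_def)
  then obtain i where i: "i < length (rev ks)"
    "wprod (rev ks) \<circ> refl k = wprod (take i (rev ks) @ drop (Suc i) (rev ks))"
    using deletion[of "rev ks" k] np K by auto
  define d where "d = take i (rev ks) @ drop (Suc i) (rev ks)"
  have "set d \<subseteq> set ks" unfolding d_def by (auto dest: in_set_takeD in_set_dropD)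
  then have dK: "set d \<subseteq> K" using ksK by auto
  have ld: "length d = length ks - 1" using i(1) unfolding d_def by simp
  have e1: "wprod (rev (k # ks)) = wprod d"
    using i(2) by (simp add: wprod_append d_def)
  have s1: "set (rev (k # ks)) \<subseteq> S" using ksK kK K by auto
  have s2: "set d \<subseteq> S" using dK K by auto
  have "wprod (rev (rev (k # ks))) = wprod (rev d)"
    by (rule wprod_rev_eq[OF s1 s2 e1])
  then have "wprod (rev d) = wprod (k # ks)" by simp
  moreover have "set (rev d) \<subseteq> K" using dK by simp
  ultimately have "length (k # ks) \<le> length (rev d)" using r unfolding reduced_def by blast
  then show False using ld by simp
qed

lemma coef_outside:
  assumes "K \<subseteq> S" "x \<in> span K" "a \<notin> K"
  shows "coef x a = 0"
  using representation_extend[OF S_ind assms(2,1)] representation_ne_zero[of K x a] assms(3) by auto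

lemma posK:
  assumes K: "K \<subseteq> S" and b: "b \<in> chamber K" and x: "x \<in> span K" "pos x"
  shows "0 \<le> b \<bullet> x"
proof -
  have "b \<bullet> x = b \<bullet> (\<Sum>a\<in>S. coef x a *\<^sub>R a)" by (simp add: coef_expand)
  also have "\<dots> = (\<Sum>a\<in>S. coef x a * (b \<bullet> a))" by (simp add: inner_sum_right)
  also have "\<dots> \<ge> 0"
  proof (rule sum_nonneg)
    fix a assume a: "a \<in> S"
    show "0 \<le> coef x a * (b \<bullet> a)"
    proof (cases "a \<in> K")
      case True then show ?thesis using a b x(2) by (auto simp: pos_def chamber_def)
    next
      case False then show ?thesis using coef_outside[OF K x(1)] by simp
    qed
  qed
  finally show ?thesis .
qed

lemma reduced_root:
  assumes K: "K \<subseteq> S" and r: "reduced K (k # ks)"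
  shows "wprod (rev ks) k \<in> span K" "pos (wprod (rev ks) k)"
    "wprod ks (wprod (rev ks) k) = k"
proof -
  have ksK: "set ks \<subseteq> K" and kK: "k \<in> K" using r by (auto simp: reduced_def)
  have "wprod (rev ks) k - k \<in> span (set (rev ks))" by (rule wprod_span)
  then have "wprod (rev ks) k - k \<in> span K" using ksK span_mono by auto
  moreover have "k \<in> span K" using kK by (simp add: span_base)
  ultimately show "wprod (rev ks) k \<in> span K" by (metis diff_add_cancel span_add)
  show "pos (wprod (rev ks) k)" by (rule reduced_pos[OF K r])
  have "set ks \<subseteq> S" using ksK K by auto
  then show "wprod ks (wprod (rev ks) k) = k" using wprod_rev_right[OF zero_ks] by blast
qed

lemma chevalley:
  assumes K: "K \<subseteq> S" and b: "b \<in> chamber K"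
  shows "reduced K ks \<Longrightarrow> wprod ks b = b \<Longrightarrow> wprod ks \<in> refl_group {k \<in> K. refl k b = b}"
proof (induction ks)
  case Nil then show ?case using refl_group.id by (simp only: wprod.simps)
next
  case (Cons k ks)
  have ksK: "set ks \<subseteq> K" and kK: "k \<in> K" using Cons.prems by (auto simp: reduced_def)
  have k0: "k \<noteq> 0" using kK K zero_S by auto
  note rr = reduced_root[OF K Cons.prems(1)]
  have "0 \<le> b \<bullet> wprod (rev ks) k" using posK[OF K b rr(1,2)] .
  also have "b \<bullet> wprod (rev ks) k = wprod ks b \<bullet> k"
    using wprod_inner[OF zero_ks[of ks], of b "wprod (rev ks) k"] rr(3) ksK K by (simp add: subset_trans)
  finally have g1: "0 \<le> wprod ks b \<bullet> k" .
  have wb: "wprod ks b = refl k b"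
    using Cons.prems(2) refl_refl[OF k0, of "wprod ks b"] by simp
  have "refl k b \<bullet> k = - (b \<bullet> k)"
    using refl_inner[OF k0, of "refl k b" k] by (simp add: refl_refl[OF k0] refl_self[OF k0])
  moreover have "0 \<le> b \<bullet> k" using b kK by (auto simp: chamber_def)
  ultimately have "b \<bullet> k = 0" using g1 wb by simp
  then have fx: "refl k b = b" using refl_fix[OF k0] by simp
  then have "wprod ks \<in> refl_group {k \<in> K. refl k b = b}"
    using Cons.IH reduced_tail[OF Cons.prems(1)] wb by simp
  then have "refl k \<circ> wprod ks \<in> refl_group {k \<in> K. refl k b = b}"
    using refl_group.step[of k "{k \<in> K. refl k b = b}"] fx kK by blast
  then show ?case by (simp only: wprod.simps)
qed

lemma dominance:
  assumes K: "K \<subseteq> S" and u: "u \<in> chamber K" and z: "z \<in> chamber K"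
  shows "reduced K ks \<Longrightarrow> z \<bullet> wprod ks u \<le> z \<bullet> u \<and>
     ((\<forall>k\<in>K. 0 < z \<bullet> k) \<longrightarrow> z \<bullet> wprod ks u = z \<bullet> u \<longrightarrow> wprod ks u = u)"
proof (induction ks)
  case Nil then show ?case by simp
next
  case (Cons k ks)
  have ksK: "set ks \<subseteq> K" and kK: "k \<in> K" using Cons.prems by (auto simp: reduced_def)
  have k0: "k \<noteq> 0" using kK K zero_S by auto
  note rr = reduced_root[OF K Cons.prems(1)]
  note IH = Cons.IH[OF reduced_tail[OF Cons.prems(1)]]
  have "0 \<le> u \<bullet> wprod (rev ks) k" using posK[OF K u rr(1,2)] .
  also have "u \<bullet> wprod (rev ks) k = wprod ks u \<bullet> k"
    using wprod_inner[OF zero_ks[of ks], of u "wprod (rev ks) k"] rr(3) ksK K by (simp add: subset_trans)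
  finally have g1: "0 \<le> wprod ks u \<bullet> k" .
  define c where "c = (2 * (wprod ks u \<bullet> k)) / (k \<bullet> k)"
  have c0: "0 \<le> c" unfolding c_def using g1 by simp
  have eq: "wprod (k # ks) u = wprod ks u - c *\<^sub>R k" by (simp add: refl_def c_def)
  have zk: "0 \<le> z \<bullet> k" using z kK by (auto simp: chamber_def)
  have e2: "z \<bullet> wprod (k # ks) u = z \<bullet> wprod ks u - c * (z \<bullet> k)"
    unfolding eq by (simp add: inner_diff_right)
  have cz: "0 \<le> c * (z \<bullet> k)" using c0 zk by simp
  show ?case
  proof (intro conjI impI)
    show "z \<bullet> wprod (k # ks) u \<le> z \<bullet> u" using e2 cz IH by linarith
    assume pz: "\<forall>k\<in>K. 0 < z \<bullet> k" and e: "z \<bullet> wprod (k # ks) u = z \<bullet> u"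
    have "z \<bullet> wprod ks u = z \<bullet> u" "c * (z \<bullet> k) = 0" using e e2 cz IH by linarith+
    then have "wprod ks u = u" "c = 0" using IH pz kK by auto
    then show "wprod (k # ks) u = u" using eq by simp
  qed
qed

end

context rootsys begin

lemma rg_mono: "K \<subseteq> K' \<Longrightarrow> refl_group K \<subseteq> refl_group K'"
proof
  fix w assume "K \<subseteq> K'" "w \<in> refl_group K"
  then obtain ks where "set ks \<subseteq> K" "w = wprod ks" by (auto simp: refl_group_iff)
  then show "w \<in> refl_group K'" unfolding refl_group_iff using \<open>K \<subseteq> K'\<close> by blast
qed

lemma rg_comp: "w1 \<in> refl_group K \<Longrightarrow> w2 \<in> refl_group K \<Longrightarrow> w1 \<circ> w2 \<in> refl_group K"
proof -
  assume "w1 \<in> refl_group K" "w2 \<in> refl_group K"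
  then obtain ks ls where "set ks \<subseteq> K" "w1 = wprod ks" "set ls \<subseteq> K" "w2 = wprod ls"
    by (auto simp: refl_group_iff)
  then show ?thesis unfolding refl_group_iff
    by (intro exI[of _ "ks @ ls"]) (auto simp: wprod_append)
qed

lemma rg_props:
  assumes K: "K \<subseteq> S" and w: "w \<in> refl_group K"
  shows "linear w" "\<And>x y. w x \<bullet> w y = x \<bullet> y"
    "\<exists>w'\<in>refl_group K. (\<forall>x. w' (w x) = x) \<and> (\<forall>x. w (w' x) = x)"
    "\<And>b. b \<in> R \<Longrightarrow> w b \<in> R"
    "\<And>x. w x - x \<in> span K"
proof -
  obtain ks where ks: "set ks \<subseteq> K" "w = wprod ks" using w by (auto simp: refl_group_iff)
  have ksS: "set ks \<subseteq> S" using ks K by auto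
  show "linear w" using ks wprod_linear by simp
  show "\<And>x y. w x \<bullet> w y = x \<bullet> y" using ks wprod_inner[OF zero_ks[OF ksS]] by simp
  have "set (rev ks) \<subseteq> K" using ks by simp
  then have "wprod (rev ks) \<in> refl_group K" unfolding refl_group_iff by blast
  then show "\<exists>w'\<in>refl_group K. (\<forall>x. w' (w x) = x) \<and> (\<forall>x. w (w' x) = x)"
    using ks wprod_rev_left[OF zero_ks[OF ksS]] wprod_rev_right[OF zero_ks[OF ksS]] by blast
  show "\<And>b. b \<in> R \<Longrightarrow> w b \<in> R" using ks wprod_R ksS S_sub by auto
  show "\<And>x. w x - x \<in> span K" using ks wprod_span span_mono by blast
qed

lemma finite_W: "finite (refl_group S)"
proof -
  have inj: "inj_on (\<lambda>w. restrict w S) (refl_group S)"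
  proof (rule inj_onI)
    fix w1 w2 assume w: "w1 \<in> refl_group S" "w2 \<in> refl_group S"
      and eq: "restrict w1 S = restrict w2 S"
    have ag: "\<And>a. a \<in> S \<Longrightarrow> w1 a = w2 a" using eq by (metis restrict_apply')
    show "w1 = w2"
    proof
      fix x
      have l1: "linear w1" and l2: "linear w2" using rg_props w by auto
      have "w1 x = w1 (\<Sum>a\<in>S. coef x a *\<^sub>R a)" by (simp add: coef_expand)
      also have "\<dots> = (\<Sum>a\<in>S. coef x a *\<^sub>R w1 a)" by (simp add: linear_sum[OF l1] linear_scale[OF l1])
      also have "\<dots> = (\<Sum>a\<in>S. coef x a *\<^sub>R w2 a)" using ag by simp
      also have "\<dots> = w2 (\<Sum>a\<in>S. coef x a *\<^sub>R a)" by (simp add: linear_sum[OF l2] linear_scale[OF l2])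
      finally show "w1 x = w2 x" by (simp add: coef_expand)
    qed
  qed
  have "(\<lambda>w. restrict w S) ` refl_group S \<subseteq> PiE S (\<lambda>_. R)"
    using rg_props(4)[OF order_refl] S_sub by auto
  then have "finite ((\<lambda>w. restrict w S) ` refl_group S)"
    using finite_PiE[OF S_fin, of "\<lambda>_. R"] R_fin finite_subset by blast
  then show ?thesis using finite_imageD inj by blast
qed

lemma finite_WK: "K \<subseteq> S \<Longrightarrow> finite (refl_group K)"
  by (rule finite_subset[OF rg_mono finite_W])

definition ht where "ht x = (\<Sum>a\<in>S. coef x a)"

lemma ht_step: "k \<in> S \<Longrightarrow> ht (x - c *\<^sub>R k) = ht x - c"
proof -
  assume k: "k \<in> S"
  have "(\<Sum>a\<in>S. coef k a) = (\<Sum>a\<in>S. if a = k then 1 else 0)"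
    by (rule sum.cong) (simp_all add: coef_basis[OF k])
  also have "\<dots> = 1" using k S_fin by simp
  finally have s1: "(\<Sum>a\<in>S. coef k a) = 1" .
  have "ht (x - c *\<^sub>R k) = (\<Sum>a\<in>S. coef x a - c * coef k a)"
    unfolding ht_def by (rule sum.cong) (simp_all add: coef_diff coef_scale)
  also have "\<dots> = ht x - c * (\<Sum>a\<in>S. coef k a)"
    by (simp add: ht_def sum_subtractf sum_distrib_left)
  finally show ?thesis using s1 by simp
qed

lemma dominant_rep:
  assumes K: "K \<subseteq> S"
  shows "\<exists>g\<in>refl_group K. g y \<in> chamber K"
proof -
  let ?O = "(\<lambda>g. ht (g y)) ` refl_group K"
  have fin: "finite ?O" using finite_WK[OF K] by simp
  have ne: "?O \<noteq> {}" using refl_group.id by blast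
  obtain g where g: "g \<in> refl_group K" "ht (g y) = Max ?O" using Max_in[OF fin ne] by auto
  have mx: "\<And>g'. g' \<in> refl_group K \<Longrightarrow> ht (g' y) \<le> ht (g y)"
    using g(2) Max_ge[OF fin] by auto
  show ?thesis
  proof (rule bexI[OF _ g(1)], rule ccontr)
    assume "g y \<notin> chamber K"
    then obtain k where k: "k \<in> K" "g y \<bullet> k < 0" by (auto simp: chamber_def not_le)
    have kS: "k \<in> S" using k K by auto
    have kk: "0 < k \<bullet> k" using kS zero_S by auto
    define c where "c = (2 * (g y \<bullet> k)) / (k \<bullet> k)"
    have c: "c < 0" unfolding c_def using k(2) kk by (simp add: divide_neg_pos)
    have "refl k \<circ> g \<in> refl_group K" using refl_group.step[OF k(1) g(1)] .
    then have "ht ((refl k \<circ> g) y) \<le> ht (g y)" by (rule mx)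
    moreover have "(refl k \<circ> g) y = g y - c *\<^sub>R k" by (simp add: refl_def c_def)
    ultimately show False using ht_step[OF kS] c by simp
  qed
qed

lemma interior_chamber:
  assumes "l \<in> chamber S" "l \<notin> frontier (chamber S)" "a \<in> S"
  shows "0 < l \<bullet> a"
proof -
  have "l \<in> interior (chamber S)" using assms(1,2) closure_subset by (auto simp: frontier_def)
  then obtain e where e: "e > 0" "ball l e \<subseteq> chamber S" using mem_interior by blast
  have a0: "a \<noteq> 0" using assms(3) zero_S by auto
  have ge: "0 \<le> l \<bullet> a" using assms(1,3) by (auto simp: chamber_def)
  show ?thesis
  proof (rule ccontr)
    assume "\<not> 0 < l \<bullet> a"
    then have z: "l \<bullet> a = 0" using ge by simp
    define y where "y = l - (e / 2 / norm a) *\<^sub>R a"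
    have "dist l y = e / 2" using a0 e by (simp add: y_def dist_norm)
    then have "y \<in> ball l e" using e by simp
    then have "0 \<le> y \<bullet> a" using e(2) assms(3) by (auto simp: chamber_def)
    moreover have "y \<bullet> a = - (e / 2 / norm a) * (a \<bullet> a)" by (simp add: y_def inner_diff_left z)
    moreover have "0 < (e / 2 / norm a) * (a \<bullet> a)" using a0 e by simp
    ultimately show False by linarith
  qed
qed

lemma pos_inner:
  assumes l: "\<And>a. a \<in> S \<Longrightarrow> 0 < l \<bullet> a" and b: "pos b" "b \<noteq> 0"
  shows "0 < l \<bullet> b"
proof -
  have eq: "l \<bullet> b = (\<Sum>a\<in>S. coef b a * (l \<bullet> a))"
    by (subst coef_expand[of b, symmetric]) (simp add: inner_sum_right)
  have nn: "\<And>a. a \<in> S \<Longrightarrow> 0 \<le> coef b a * (l \<bullet> a)" using b(1) l by (auto simp: pos_def less_imp_le)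
  show ?thesis
  proof (rule ccontr)
    assume "\<not> 0 < l \<bullet> b"
    then have "(\<Sum>a\<in>S. coef b a * (l \<bullet> a)) = 0" using eq sum_nonneg[of S "\<lambda>a. coef b a * (l \<bullet> a)", OF nn] by linarith
    then have z: "\<forall>a\<in>S. coef b a * (l \<bullet> a) = 0" using sum_nonneg_eq_0_iff[OF S_fin nn] by simp
    have "coef b a = 0" if a: "a \<in> S" for a
    proof -
      have "coef b a * (l \<bullet> a) = 0" using z a by blast
      moreover have "l \<bullet> a \<noteq> 0" using l[OF a] by simp
      ultimately show ?thesis by simp
    qed
    then show False using coef_zero b(2) by blast
  qed
qed

lemma regular_root:
  assumes l: "\<And>a. a \<in> S \<Longrightarrow> 0 < l \<bullet> a" and b: "b \<in> R"
  shows "l \<bullet> b \<noteq> 0"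
proof -
  have b0: "b \<noteq> 0" using b zero_R by auto
  from root_sign[OF b] show ?thesis
  proof
    assume "pos b" then show ?thesis using pos_inner[OF l _ b0] by force
  next
    assume "pos (- b)" then have "0 < l \<bullet> (- b)" using pos_inner[OF l, of "-b"] b0 by auto
    then show ?thesis by simp
  qed
qed

lemma chevalley_rg:
  assumes K: "K \<subseteq> S" and b: "b \<in> chamber K" and w: "w \<in> refl_group K" "w b = b"
  shows "w \<in> refl_group {k \<in> K. refl k b = b}"
proof -
  obtain ks where "set ks \<subseteq> K" "w = wprod ks" using w by (auto simp: refl_group_iff)
  then obtain ls where "reduced K ls" "wprod ls = w" using exists_reduced by metis
  then show ?thesis using chevalley[OF K b] w(2) by metis
qed

lemma dominance_rg:
  assumes K: "K \<subseteq> S" and u: "u \<in> chamber K" and z: "\<forall>k\<in>K. 0 < z \<bullet> k"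
    and t: "t \<in> refl_group K"
  shows "z \<bullet> t u \<le> z \<bullet> u" "z \<bullet> t u = z \<bullet> u \<Longrightarrow> t u = u"
proof -
  have zc: "z \<in> chamber K" using z by (auto simp: chamber_def less_imp_le)
  obtain ks where "set ks \<subseteq> K" "t = wprod ks" using t by (auto simp: refl_group_iff)
  then obtain ls where ls: "reduced K ls" "wprod ls = t" using exists_reduced by metis
  note d = dominance[OF K u zc ls(1)]
  show "z \<bullet> t u \<le> z \<bullet> u" using d ls(2) by simp
  show "z \<bullet> t u = z \<bullet> u \<Longrightarrow> t u = u" using d ls(2) z by auto
qed

end


lemma extreme_linear_image:
  assumes "linear f" "inj f"
  shows "(f x extreme_point_of f ` S) \<longleftrightarrow> (x extreme_point_of S)"
proof -
  have "(f x extreme_point_of f ` S) \<longleftrightarrow> f ` {x} face_of f ` S" by (simp add: face_of_singleton)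
  also have "\<dots> \<longleftrightarrow> {x} face_of S" by (rule face_of_linear_image[OF assms])
  finally show ?thesis by (simp add: face_of_singleton)
qed

context rootsys begin

lemma rg_inv:
  assumes K: "K \<subseteq> S" and w: "w \<in> refl_group K"
  obtains w' where "w' \<in> refl_group K" "\<And>x. w' (w x) = x" "\<And>x. w (w' x) = x"
  using rg_props(3)[OF K w] by blast

lemma rg_inj: "K \<subseteq> S \<Longrightarrow> w \<in> refl_group K \<Longrightarrow> inj w"
  by (metis rg_inv injI)

lemma orbit_image:
  assumes w: "w \<in> refl_group S"
  shows "w ` (\<Union>v\<in>refl_group S. v ` L) = (\<Union>v\<in>refl_group S. v ` L)"
proof
  show "w ` (\<Union>v\<in>refl_group S. v ` L) \<subseteq> (\<Union>v\<in>refl_group S. v ` L)"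
  proof
    fix y assume "y \<in> w ` (\<Union>v\<in>refl_group S. v ` L)"
    then obtain v l where v: "v \<in> refl_group S" "l \<in> L" "y = w (v l)" by auto
    have "w \<circ> v \<in> refl_group S" by (rule rg_comp[OF w v(1)])
    moreover have "y = (w \<circ> v) l" using v by simp
    ultimately show "y \<in> (\<Union>v\<in>refl_group S. v ` L)" using v(2) by blast
  qed
  show "(\<Union>v\<in>refl_group S. v ` L) \<subseteq> w ` (\<Union>v\<in>refl_group S. v ` L)"
  proof
    fix y assume "y \<in> (\<Union>v\<in>refl_group S. v ` L)"
    then obtain v l where v: "v \<in> refl_group S" "l \<in> L" "y = v l" by auto
    obtain w' where w': "w' \<in> refl_group S" "\<And>x. w (w' x) = x" using rg_inv[OF order_refl w] by metis
    have "w' \<circ> v \<in> refl_group S" by (rule rg_comp[OF w'(1) v(1)])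
    moreover have "w' (v l) = (w' \<circ> v) l" by simp
    ultimately have "w' (v l) \<in> (\<Union>v\<in>refl_group S. v ` L)" using v(2) by blast
    moreover have "y = w (w' (v l))" using w'(2) v(3) by simp
    ultimately show "y \<in> w ` (\<Union>v\<in>refl_group S. v ` L)" by blast
  qed
qed

lemma hull_image:
  assumes w: "w \<in> refl_group S"
  shows "w ` (convex hull (\<Union>v\<in>refl_group S. v ` L)) = convex hull (\<Union>v\<in>refl_group S. v ` L)"
  using convex_hull_linear_image[OF rg_props(1)[OF order_refl w]] orbit_image[OF w] by simp

end

context rootsys begin

lemma bary_facts:
  assumes fin: "finite L"
    and Ff: "F face_of convex hull (\<Union>v\<in>refl_group S. v ` L)" and Fne: "F \<noteq> {}"
  shows "barycenter F \<in> rel_interior F"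
    "\<And>w. w \<in> refl_group S \<Longrightarrow> w ` F = F \<Longrightarrow> w (barycenter F) = barycenter F"
    "\<And>w. w \<in> refl_group S \<Longrightarrow> w (barycenter F) = barycenter F \<Longrightarrow> w ` F = F"
proof -
  define X where "X = (\<Union>v\<in>refl_group S. v ` L)"
  define P where "P = convex hull X"
  have Xfin: "finite X" unfolding X_def using finite_W fin by blast
  have Pc: "compact P" "convex P" unfolding P_def using Xfin
    by (simp_all add: finite_imp_compact_convex_hull)
  have Ff': "F face_of P" using Ff by (simp add: P_def X_def)
  have Fc: "compact F" "convex F" using face_of_imp_compact[OF Pc(2,1) Ff'] face_of_imp_convex[OF Ff'] by auto
  define E where "E = {v. v extreme_point_of F}"
  have FE: "F = convex hull E" unfolding E_def by (rule Krein_Milman_Minkowski[OF Fc])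
  have EX: "E \<subseteq> X"
  proof
    fix v assume "v \<in> E"
    then have "v extreme_point_of P" using extreme_point_of_face[OF Ff'] by (auto simp: E_def)
    then show "v \<in> X" unfolding P_def by (rule extreme_point_of_convex_hull)
  qed
  have Efin: "finite E" using EX Xfin finite_subset by blast
  have Ene: "E \<noteq> {}" using FE Fne by auto
  have cE: "0 < card E" using Efin Ene by (simp add: card_gt_0_iff)
  have bdef: "barycenter F = (1 / real (card E)) *\<^sub>R (\<Sum>v\<in>E. v)"
    by (simp add: barycenter_def E_def)
  have "barycenter F \<in> {y. \<exists>u. (\<forall>x \<in> E. 0 < u x) \<and> sum u E = 1 \<and> sum (\<lambda>x. u x *\<^sub>R x) E = y}"
  proof (intro CollectI exI[of _ "\<lambda>_. 1 / real (card E)"] conjI ballI)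
    show "0 < 1 / real (card E)" for x using cE by simp
    show "(\<Sum>x\<in>E. 1 / real (card E)) = 1" using cE by simp
    show "(\<Sum>x\<in>E. (1 / real (card E)) *\<^sub>R x) = barycenter F" by (simp add: bdef scaleR_sum_right)
  qed
  then show bri: "barycenter F \<in> rel_interior F"
    using explicit_subset_rel_interior_convex_hull_minimal[OF Efin] FE by blast
  have bF: "barycenter F \<in> F" using bri rel_interior_subset by blast
  have PP: "\<And>w. w \<in> refl_group S \<Longrightarrow> w ` P = P" unfolding P_def X_def by (rule hull_image)
  show "w (barycenter F) = barycenter F" if w: "w \<in> refl_group S" "w ` F = F" for w
  proof -
    have lw: "linear w" and iw: "inj w" using rg_props(1)[OF order_refl w(1)] rg_inj[OF order_refl w(1)] by auto
    obtain w' where w': "w' \<in> refl_group S" "\<And>x. w' (w x) = x" "\<And>x. w (w' x) = x"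
      using rg_inv[OF order_refl w(1)] by metis
    have iw': "inj w'" and lw': "linear w'" using rg_props(1)[OF order_refl w'(1)] rg_inj[OF order_refl w'(1)] by auto
    have "w' ` F = w' ` (w ` F)" using w(2) by simp
    also have "\<dots> = F" using w'(2) by (simp add: image_image)
    finally have w'F: "w' ` F = F" .
    have "w ` E = E"
    proof
      show "w ` E \<subseteq> E"
      proof
        fix y assume "y \<in> w ` E"
        then obtain v where v: "v \<in> E" "y = w v" by blast
        then have "w v extreme_point_of w ` F" using extreme_linear_image[OF lw iw, of v F] by (simp add: E_def)
        then show "y \<in> E" using w(2) v(2) by (simp add: E_def)
      qed
      show "E \<subseteq> w ` E"
      proof
        fix v assume "v \<in> E"
        then have "w' v extreme_point_of w' ` F" using extreme_linear_image[OF lw' iw', of v F] by (simp add: E_def)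
        then have "w' v \<in> E" using w'F by (simp add: E_def)
        moreover have "v = w (w' v)" using w'(3)[of v] by simp
        ultimately show "v \<in> w ` E" by blast
      qed
    qed
    have "inj_on w E" using iw by (simp add: inj_on_def inj_def)
    then have "(\<Sum>v\<in>w ` E. v) = (\<Sum>v\<in>E. w v)" by (simp add: sum.reindex)
    then have "(\<Sum>v\<in>E. w v) = (\<Sum>v\<in>E. v)" using \<open>w ` E = E\<close> by simp
    then show ?thesis
      by (simp add: bdef linear_scale[OF lw] linear_sum[OF lw])
  qed
  show "w ` F = F" if w: "w \<in> refl_group S" "w (barycenter F) = barycenter F" for w
  proof -
    obtain w' where w': "w' \<in> refl_group S" "\<And>x. w' (w x) = x" "\<And>x. w (w' x) = x"
      using rg_inv[OF order_refl w(1)] by metis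
    have lw: "linear w" and iw: "inj w" using rg_props(1)[OF order_refl w(1)] rg_inj[OF order_refl w(1)] by auto
    have lw': "linear w'" and iw': "inj w'" using rg_props(1)[OF order_refl w'(1)] rg_inj[OF order_refl w'(1)] by auto
    have wb': "w' (barycenter F) = barycenter F" using w'(2)[of "barycenter F"] w(2) by simp
    have wF: "w ` F face_of P" using face_of_linear_image[OF lw iw, of F P] PP[OF w(1)] Ff' by simp
    have wF': "w' ` F face_of P" using face_of_linear_image[OF lw' iw', of F P] PP[OF w'(1)] Ff' by simp
    have FP: "F \<subseteq> P" using Ff' face_of_imp_subset by blast
    have "barycenter F \<in> w ` F" using bF w(2) by (metis image_eqI)
    then have s1: "F \<subseteq> w ` F" using subset_of_face_of[OF wF FP] bri by blast
    have "barycenter F \<in> w' ` F" using bF wb' by (metis image_eqI)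
    then have "F \<subseteq> w' ` F" using subset_of_face_of[OF wF' FP] bri by blast
    then have "w ` F \<subseteq> w ` (w' ` F)" by blast
    also have "w ` (w' ` F) = F" using w'(3) by (simp add: image_image)
    finally show ?thesis using s1 by blast
  qed
qed

end

context rootsys begin

lemma part1:
  assumes fin: "finite L" and K: "K \<subseteq> S"
    and Ff: "F face_of convex hull (\<Union>v\<in>refl_group S. v ` L)" and Fne: "F \<noteq> {}"
    and bc: "barycenter F \<in> chamber K"
  shows "{w \<in> refl_group K. w ` F = F} = refl_group {k \<in> K. refl k (barycenter F) = barycenter F}"
proof -
  note bf = bary_facts[OF fin Ff Fne]
  let ?b = "barycenter F"
  have KS: "refl_group K \<subseteq> refl_group S" using rg_mono[OF K] .
  show ?thesis
  proof
    show "{w \<in> refl_group K. w ` F = F} \<subseteq> refl_group {k \<in> K. refl k ?b = ?b}"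
    proof
      fix w assume "w \<in> {w \<in> refl_group K. w ` F = F}"
      then have w: "w \<in> refl_group K" "w ` F = F" by auto
      then have "w ?b = ?b" using bf(2) KS by blast
      then show "w \<in> refl_group {k \<in> K. refl k ?b = ?b}" using chevalley_rg[OF K bc w(1)] by blast
    qed
    show "refl_group {k \<in> K. refl k ?b = ?b} \<subseteq> {w \<in> refl_group K. w ` F = F}"
    proof
      fix w assume w: "w \<in> refl_group {k \<in> K. refl k ?b = ?b}"
      have wK: "w \<in> refl_group K" using rg_mono[of "{k \<in> K. refl k ?b = ?b}" K] w by blast
      have "w ?b = ?b" using w
      proof induction
        case id then show ?case by simp
      next
        case (step k w) then show ?case by simp
      qed
      then have "w ` F = F" using bf(3) wK KS by blast
      then show "w \<in> {w \<in> refl_group K. w ` F = F}" using wK by blast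
    qed
  qed
qed

lemma part2:
  assumes fin: "finite L" and LC: "L \<subseteq> chamber S" and K: "K \<subseteq> S"
    and Ff: "F face_of convex hull (\<Union>v\<in>refl_group S. v ` L)"
    and nd: "non_degenerate S (convex hull (\<Union>v\<in>refl_group S. v ` L))"
    and s: "s \<in> refl_group K"
  shows "s ` F \<inter> F = F \<or> s ` F \<inter> F = {}"
proof (rule disjCI)
  assume ne: "s ` F \<inter> F \<noteq> {}"
  define X where "X = (\<Union>v\<in>refl_group S. v ` L)"
  define P where "P = convex hull X"
  have Xfin: "finite X" unfolding X_def using finite_W fin by blast
  have Pc: "compact P" "convex P" unfolding P_def using Xfin
    by (simp_all add: finite_imp_compact_convex_hull)
  have Ff': "F face_of P" using Ff by (simp add: P_def X_def)
  have PP: "\<And>w. w \<in> refl_group S \<Longrightarrow> w ` P = P" unfolding P_def X_def by (rule hull_image)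
  have KS: "refl_group K \<subseteq> refl_group S" using rg_mono[OF K] .
  have sS: "s \<in> refl_group S" using s KS by blast
  have ls: "linear s" "inj s" using rg_props(1)[OF order_refl sS] rg_inj[OF order_refl sS] by auto
  have sF: "s ` F face_of P" using face_of_linear_image[OF ls, of F P] PP[OF sS] Ff' by simp
  have GF: "s ` F \<inter> F face_of P" by (rule face_of_Int[OF sF Ff'])
  have Gc: "compact (s ` F \<inter> F)" "convex (s ` F \<inter> F)"
    using face_of_imp_compact[OF Pc(2,1) GF] face_of_imp_convex[OF GF] by auto
  obtain x where x: "x extreme_point_of (s ` F \<inter> F)"
    using extreme_point_exists_convex[OF Gc ne] by blast
  have xP: "x extreme_point_of P" and xG: "x \<in> s ` F \<inter> F"
    using extreme_point_of_face[OF GF] x by auto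
  have "x \<in> X" using xP unfolding P_def by (rule extreme_point_of_convex_hull)
  then obtain v l where v: "v \<in> refl_group S" "l \<in> L" "x = v l" unfolding X_def by blast
  obtain v' where v': "v' \<in> refl_group S" "\<And>y. v' (v y) = y" "\<And>y. v (v' y) = y"
    using rg_inv[OF order_refl v(1)] by metis
  have lv': "linear v'" "inj v'" using rg_props(1)[OF order_refl v'(1)] rg_inj[OF order_refl v'(1)] by auto
  have "v' x extreme_point_of v' ` P" using extreme_linear_image[OF lv', of x P] xP by simp
  then have "l extreme_point_of P" using PP[OF v'(1)] v(3) v'(2) by simp
  then have lnf: "l \<notin> frontier (chamber S)" using nd unfolding non_degenerate_def P_def X_def by blast
  have lpos: "\<And>a. a \<in> S \<Longrightarrow> 0 < l \<bullet> a" using interior_chamber[OF _ lnf] LC v(2) by blast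
  have xreg: "\<And>b. b \<in> R \<Longrightarrow> x \<bullet> b \<noteq> 0"
  proof -
    fix b assume b: "b \<in> R"
    have "x \<bullet> b = v l \<bullet> v (v' b)" using v(3) v'(3) by simp
    also have "\<dots> = l \<bullet> v' b" using rg_props(2)[OF order_refl v(1)] by simp
    finally show "x \<bullet> b \<noteq> 0" using regular_root[OF lpos] rg_props(4)[OF order_refl v'(1) b] by simp
  qed
  have "F exposed_face_of P"
    using exposed_face_of_polyhedron[OF polyhedron_convex_hull[OF Xfin]] Ff' by (simp add: P_def)
  then obtain a h where ah: "P \<subseteq> {y. a \<bullet> y \<le> h}" "F = P \<inter> {y. a \<bullet> y = h}"
    unfolding exposed_face_of_def by blast
  obtain g where g: "g \<in> refl_group K" "g a \<in> chamber K" using dominant_rep[OF K] by blast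
  define u0 where "u0 = g a"
  obtain g' where g': "g' \<in> refl_group K" "\<And>y. g' (g y) = y" "\<And>y. g (g' y) = y"
    using rg_inv[OF K g(1)] by metis
  have au: "a = g' u0" using g'(2) by (simp add: u0_def)
  obtain c0 where c0: "c0 \<in> refl_group K" "c0 x \<in> chamber K" using dominant_rep[OF K] by blast
  define x' where "x' = c0 x"
  obtain c where c: "c \<in> refl_group K" "\<And>y. c (c0 y) = y" "\<And>y. c0 (c y) = y"
    using rg_inv[OF K c0(1)] by metis
  obtain c' where c': "c' \<in> refl_group K" "\<And>y. c' (c y) = y" "\<And>y. c (c' y) = y"
    using rg_inv[OF K c(1)] by metis
  have xx: "x = c x'" using c(2) by (simp add: x'_def)
  have cS: "c \<in> refl_group S" "c0 \<in> refl_group S" "c' \<in> refl_group S" "g' \<in> refl_group S"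
    using c(1) c0(1) c'(1) g'(1) KS by auto
  have ci: "\<And>p q. c p \<bullet> c q = p \<bullet> q" using rg_props(2)[OF K c(1)] .
  have x'pos: "\<And>k. k \<in> K \<Longrightarrow> 0 < x' \<bullet> k"
  proof -
    fix k assume k: "k \<in> K"
    have ge: "0 \<le> x' \<bullet> k" using c0(2) k by (auto simp: chamber_def x'_def)
    have "x' \<bullet> k = c x' \<bullet> c k" using ci by simp
    also have "\<dots> = x \<bullet> c k" using xx by simp
    finally have "x' \<bullet> k = x \<bullet> c k" .
    moreover have "c k \<in> R" using rg_props(4)[OF K c(1)] k K S_sub by blast
    ultimately have "x' \<bullet> k \<noteq> 0" using xreg by simp
    then show "0 < x' \<bullet> k" using ge by simp
  qed
  have u0C: "u0 \<in> chamber K" using g(2) by (simp add: u0_def)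
  have x'pos2: "\<forall>k\<in>K. 0 < x' \<bullet> k" using x'pos by blast
  note dom = dominance_rg[OF K u0C x'pos2]
  have xF: "x \<in> F" and xsF: "x \<in> s ` F" using xG by auto
  have x'P: "x' \<in> P" using xF ah(2) PP[OF cS(2)] by (auto simp: x'_def)
  have "g' x' \<in> P" using x'P PP[OF cS(4)] by blast
  then have "a \<bullet> g' x' \<le> h" using ah(1) by blast
  moreover have "a \<bullet> g' x' = u0 \<bullet> x'" using au rg_props(2)[OF K g'(1)] by simp
  ultimately have h1: "x' \<bullet> u0 \<le> h" by (simp add: inner_commute)
  have axh: "a \<bullet> x = h" using xF ah(2) by blast
  have "a \<bullet> x = c' a \<bullet> c' x" using rg_props(2)[OF K c'(1)] by simp
  also have "c' x = x'" using xx c'(2) by simp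
  finally have "x' \<bullet> (c' \<circ> g') u0 = h" using axh au by (simp add: inner_commute)
  moreover have cg: "c' \<circ> g' \<in> refl_group K" by (rule rg_comp[OF c'(1) g'(1)])
  ultimately have hx: "x' \<bullet> u0 = h" and "(c' \<circ> g') u0 = u0"
  proof -
    assume e: "x' \<bullet> (c' \<circ> g') u0 = h" and cg: "c' \<circ> g' \<in> refl_group K"
    have le: "x' \<bullet> (c' \<circ> g') u0 \<le> x' \<bullet> u0" using dom(1)[OF cg] .
    show hx: "x' \<bullet> u0 = h" using le e h1 by linarith
    show "(c' \<circ> g') u0 = u0" using dom(2)[OF cg] e hx by simp
  qed
  then have e1: "c' a = u0" using au by auto
  have ca: "c u0 = a" using e1 c'(3) by metis
  obtain s' where s': "s' \<in> refl_group K" "\<And>y. s' (s y) = y" "\<And>y. s (s' y) = y"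
    using rg_inv[OF K s] by metis
  have "s' x \<in> F" using xsF s'(2) by auto
  then have "a \<bullet> s' x = h" using ah(2) by blast
  moreover have "a \<bullet> s' x = s a \<bullet> x" using rg_props(2)[OF K s, of a "s' x"] s'(3) by simp
  moreover have "s a \<bullet> x = c' (s a) \<bullet> x'" using rg_props(2)[OF K c'(1), of "s a" x] xx c'(2) by simp
  ultimately have "x' \<bullet> (c' \<circ> s \<circ> g') u0 = h" using au by (simp add: inner_commute)
  moreover have csg: "c' \<circ> s \<circ> g' \<in> refl_group K" by (rule rg_comp[OF rg_comp[OF c'(1) s] g'(1)])
  ultimately have "(c' \<circ> s \<circ> g') u0 = u0" using dom(2)[OF csg] hx by simp
  then have "c' (s a) = c' a" using au e1 by simp
  then have sa: "s a = a" using c'(3) by metis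
  have s'a: "s' a = a" using s'(2)[of a] sa by simp
  have sinner: "\<And>p q. s p \<bullet> s q = p \<bullet> q" using rg_props(2)[OF K s] .
  have s'inner: "\<And>p q. s' p \<bullet> s' q = p \<bullet> q" using rg_props(2)[OF K s'(1)] .
  have s'S: "s' \<in> refl_group S" using s'(1) KS by blast
  have "s ` F = F"
  proof
    show "s ` F \<subseteq> F"
    proof
      fix y assume "y \<in> s ` F"
      then obtain z where z: "z \<in> F" "y = s z" by blast
      have "z \<in> P" "a \<bullet> z = h" using z ah(2) by auto
      then have "s z \<in> P" using PP[OF sS] by blast
      moreover have "a \<bullet> s z = h" using sinner[of a z] sa \<open>a \<bullet> z = h\<close> by metis
      ultimately show "y \<in> F" using z ah(2) by blast
    qed
    show "F \<subseteq> s ` F"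
    proof
      fix y assume y: "y \<in> F"
      have "y \<in> P" "a \<bullet> y = h" using y ah(2) by auto
      then have "s' y \<in> P" using PP[OF s'S] by blast
      moreover have "a \<bullet> s' y = h" using s'inner[of a y] s'a \<open>a \<bullet> y = h\<close> by metis
      ultimately have "s' y \<in> F" using ah(2) by blast
      moreover have "y = s (s' y)" using s'(3) by simp
      ultimately show "y \<in> s ` F" by blast
    qed
  qed
  then show "s ` F \<inter> F = F" by simp
qed

end

theorem lemma2p5:
  fixes R S K \<Lambda> F :: "'a::euclidean_space set"
  assumes "reduced_root_system R"
    and "simple_system R S"
    and "finite \<Lambda>" and "\<Lambda> \<subseteq> chamber S"
    and "aff_dim (convex hull (\<Union>w\<in>refl_group S. w ` \<Lambda>)) = int DIM('a)"
    and "K \<subseteq> S"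
    and "F facet_of (convex hull (\<Union>w\<in>refl_group S. w ` \<Lambda>))"
    and "barycenter F \<in> chamber K"
  shows "{w \<in> refl_group K. w ` F = F} = refl_group {k \<in> K. refl k (barycenter F) = barycenter F}
    \<and> (non_degenerate S (convex hull (\<Union>w\<in>refl_group S. w ` \<Lambda>)) \<longrightarrow>
         (\<forall>s\<in>refl_group K. s ` F \<inter> F = F \<or> s ` F \<inter> F = {}))"
proof -
  interpret rootsys R S using assms(1,2) by unfold_locales
  have Ff: "F face_of convex hull (\<Union>w\<in>refl_group S. w ` \<Lambda>)" and Fne: "F \<noteq> {}"
    using assms(7) by (auto simp: facet_of_def)
  show ?thesis
    using part1[OF assms(3) assms(6) Ff Fne assms(8)] part2[OF assms(3,4,6) Ff] by blast
qed

end
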